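(* Let $N\ge3$ be odd, $K=\tilde F(N)$, $L=N(N+1)$, $n=N$, and let $C^0,\dots,C^{K-1}$ be the sequences $c^m_i=\omega_{N+1}^{\pi_m(\langle i\rangle_N)\cdot i}$ ($0\le i<L$) built from a $K\times N$ circular Florentine rectangle with rows $\pi_0,\dots,\pi_{K-1}$. Let $\theta_c$ and $\theta_{\max}$ be as follows: $\theta_c=\max\{|\theta_{C^m,C^{m'}}(\tau)|:m\neq m',\ 0\le\tau<L\}$, $\theta_a=\max\{|\theta_{C^m}(\tau)|:0\le m<K,\ 0<\tau<L\}$, $\theta_{\max}=\max\{\theta_a,\theta_c\}$. Then $\theta_c=\frac{L}{\sqrt{L-n}}$ (i.e., equality holds in the bound $\theta_c\ge L/\sqrt{L-n}$). Moreover, setting $$\theta_{opti}=L\sqrt{\frac{(K-1)L+n}{(L-n)(KL-1)}},$$ if $N\to\infty$ through odd integers with $\tilde F(N)\to\infty$, then $\theta_{\max}/\theta_{opti}\to 1$.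
   Context: $\omega_n=e^{2\pi\sqrt{-1}/n}$; $\langle i\rangle_N$ is $i$ mod $N$. An $M\times N$ circular Florentine rectangle (CFR) over $\mathbb{Z}_N$ is an $M\times N$ array whose rows $\pi_i:\mathbb{Z}_N\to\mathbb{Z}_N$ are permutations such that for every $m\in\mathbb{Z}_N\setminus\{0\}$ and all $i,j,x,y$: $(\pi_i(x),\pi_i(x+m))=(\pi_j(y),\pi_j(y+m))$ (indices mod $N$) iff $i=j$ and $x=y$. $\tilde F(N)$ is the largest $M$ for which an $M\times N$ CFR exists. Periodic correlation: $\theta_{C,D}(\tau)=\sum_{t=0}^{L-1}c_td^*_{\langle t+\tau\rangle_L}$, $\theta_C=\theta_{C,C}$. These sequences have frequency-domain duals vanishing exactly on $\{1+a(N+1):a\in\mathbb{Z}_N\}$ (a set of $n=N$ carriers). *)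

theory Defs
  imports Complex_Main
begin

definition omega :: "nat \<Rightarrow> complex" where
  "omega n = cis (2 * pi / real n)"

definition is_CFR :: "nat \<Rightarrow> nat \<Rightarrow> (nat \<Rightarrow> nat \<Rightarrow> nat) \<Rightarrow> bool" where
  "is_CFR N M \<pi> \<longleftrightarrow>
     (\<forall>i<M. bij_betw (\<pi> i) {..<N} {..<N}) \<and>
     (\<forall>m. 1 \<le> m \<and> m < N \<longrightarrow>
        (\<forall>i<M. \<forall>j<M. \<forall>x<N. \<forall>y<N.
           (\<pi> i x = \<pi> j y \<and> \<pi> i ((x + m) mod N) = \<pi> j ((y + m) mod N))
           \<longleftrightarrow> (i = j \<and> x = y)))"

definition F_tilde :: "nat \<Rightarrow> nat" where
  "F_tilde N = (GREATEST M. \<exists>\<pi>. is_CFR N M \<pi>)"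

definition pcorr :: "nat \<Rightarrow> (nat \<Rightarrow> complex) \<Rightarrow> (nat \<Rightarrow> complex) \<Rightarrow> nat \<Rightarrow> complex" where
  "pcorr L c d \<tau> = (\<Sum>t<L. c t * cnj (d ((t + \<tau>) mod L)))"

definition cfr_seq :: "nat \<Rightarrow> (nat \<Rightarrow> nat \<Rightarrow> nat) \<Rightarrow> nat \<Rightarrow> nat \<Rightarrow> complex" where
  "cfr_seq N \<pi> m i = omega (N + 1) ^ (\<pi> m (i mod N) * i)"

definition theta_c :: "nat \<Rightarrow> nat \<Rightarrow> (nat \<Rightarrow> nat \<Rightarrow> nat) \<Rightarrow> real" where
  "theta_c N K \<pi> = Max {cmod (pcorr (N * (N + 1)) (cfr_seq N \<pi> m) (cfr_seq N \<pi> m') \<tau>) | m m' \<tau>.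
      m < K \<and> m' < K \<and> m \<noteq> m' \<and> \<tau> < N * (N + 1)}"

definition theta_a :: "nat \<Rightarrow> nat \<Rightarrow> (nat \<Rightarrow> nat \<Rightarrow> nat) \<Rightarrow> real" where
  "theta_a N K \<pi> = Max {cmod (pcorr (N * (N + 1)) (cfr_seq N \<pi> m) (cfr_seq N \<pi> m) \<tau>) | m \<tau>.
      m < K \<and> 0 < \<tau> \<and> \<tau> < N * (N + 1)}"

definition theta_max :: "nat \<Rightarrow> nat \<Rightarrow> (nat \<Rightarrow> nat \<Rightarrow> nat) \<Rightarrow> real" where
  "theta_max N K \<pi> = max (theta_a N K \<pi>) (theta_c N K \<pi>)"

definition theta_opti :: "nat \<Rightarrow> nat \<Rightarrow> nat \<Rightarrow> real" where
  "theta_opti K L n = real L * sqrt (((real K - 1) * real L + real n) /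
                                   ((real L - real n) * (real K * real L - 1)))"

end

theory Submission
  imports Defs "HOL-Analysis.Analysis"
begin

lemma om_pow: "omega n ^ k = cis (2 * pi * real k / real n)"
proof -
  have "omega n ^ k = cis (real k * (2 * pi / real n))" unfolding omega_def by (rule Complex.DeMoivre)
  thus ?thesis by (simp add: field_simps)
qed

lemma om_pow_eq_1: assumes "n \<ge> 1" shows "omega n ^ k = 1 \<longleftrightarrow> n dvd k"
proof -
  have "omega n ^ k = exp(2 * of_real pi * \<i> * of_nat k / of_nat n)"
    unfolding om_pow cis_conv_exp by (simp add: field_simps)
  thus ?thesis using complex_root_unity_eq_1[OF assms] by simp
qed

lemma om_n: assumes "n \<ge> 1" shows "omega n ^ n = 1"
  using om_pow_eq_1[OF assms] by simp

lemma om_norm[simp]: "norm (omega n ^ k) = 1"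
  unfolding om_pow by simp

lemma om_mod: assumes "n \<ge> 1" shows "omega n ^ k = omega n ^ (k mod n)"
proof -
  have "omega n ^ k = omega n ^ (k mod n) * (omega n ^ n) ^ (k div n)"
    by (metis mod_div_mult_eq power_add power_mult mult.commute)
  thus ?thesis using om_n[OF assms] by simp
qed

lemma om_cnj: assumes "n \<ge> 1" shows "cnj (omega n ^ k) = omega n ^ ((n - 1) * k)"
proof -
  have "cnj (omega n ^ k) * omega n ^ k = 1"
    by (metis om_norm complex_norm_square mult.commute of_real_1 power_one)
  moreover have "omega n ^ ((n - 1) * k) * omega n ^ k = 1"
  proof -
    have "omega n ^ ((n - 1) * k) * omega n ^ k = (omega n ^ n) ^ k"
      using assms by (simp add: power_add[symmetric] power_mult[symmetric] algebra_simps)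
    thus ?thesis using om_n[OF assms] by simp
  qed
  moreover have "omega n ^ k \<noteq> 0" using om_norm[of n k] by (metis norm_zero zero_neq_one)
  ultimately show ?thesis by (metis mult_right_cancel)
qed

lemma grid_sum:
  fixes f :: "nat \<Rightarrow> 'a::comm_monoid_add"
  shows "(\<Sum>t<n*k. f t) = (\<Sum>q<n. \<Sum>a<k. f (a + k*q))"
proof -
  have "(\<Sum>t<n*k. f t) = (\<Sum>q<n. sum f {q*k..<q*k+k})" by (rule sum.nat_group[symmetric])
  also have "\<dots> = (\<Sum>q<n. \<Sum>a<k. f (a + k*q))"
  proof (rule sum.cong[OF refl])
    fix q
    show "sum f {q*k..<q*k+k} = (\<Sum>a<k. f (a + k*q))"
      using sum.atLeastLessThan_shift_bounds[of f 0 "q*k" k]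
      by (simp add: atLeast0LessThan add.commute mult.commute)
  qed
  finally show ?thesis .
qed

lemma om_NN: assumes "N \<ge> 1" shows "omega (N+1) ^ (N*N*k) = omega (N+1) ^ k"
proof -
  have "N*N*k = k + (N+1)*((N-1)*k)" using assms
    by (cases N) (auto simp: algebra_simps)
  hence "omega (N+1) ^ (N*N*k) = omega (N+1) ^ k * (omega (N+1) ^ (N+1)) ^ ((N-1)*k)"
    by (simp only: power_add power_mult)
  thus ?thesis using om_n[of "N+1"] by simp
qed

lemma mod_L_aux: "(c * (x mod (N*(N+1)))) mod (N+1) = (c * x) mod ((N+1)::nat)"
proof -
  have "(c * (x mod (N*(N+1)))) mod (N+1) = (c * (x mod (N*(N+1)) mod (N+1))) mod (N+1)"
    by (simp add: mod_mult_right_eq)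
  also have "x mod (N*(N+1)) mod (N+1) = x mod (N+1)"
    by (rule mod_mod_cancel) (rule dvd_triv_right)
  also have "(c * (x mod (N+1))) mod (N+1) = (c * x) mod (N+1)"
    by (simp add: mod_mult_right_eq)
  finally show ?thesis .
qed

lemma term_eq:
  fixes N :: nat and P Q :: "nat \<Rightarrow> nat" and \<tau> a q :: nat
  assumes "N \<ge> 1" "a < N"
  defines "z \<equiv> omega (N+1)"
  defines "b \<equiv> (a + \<tau>) mod N"
  shows "z^(P ((a + N*q) mod N) * (a + N*q)) *
         cnj (z^(Q (((a + N*q) + \<tau>) mod (N*(N+1)) mod N) * (((a + N*q) + \<tau>) mod (N*(N+1)))))
       = z^(P a * a) * cnj (z^(Q b * (a+\<tau>))) * (z^(P a * N + Q b))^q"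
proof -
  have 1: "(a + N*q) mod N = a" using assms by simp
  have 2: "((a + N*q) + \<tau>) mod (N*(N+1)) mod N = b"
  proof -
    have "((a + N*q) + \<tau>) mod (N*(N+1)) mod N = ((a + \<tau>) + N*q) mod N"
      by (metis add.assoc add.commute dvd_triv_left mod_mod_cancel)
    also have "\<dots> = b" unfolding b_def by simp
    finally show ?thesis .
  qed
  have 3: "z^(Q b * (((a + N*q) + \<tau>) mod (N*(N+1)))) = z^(Q b * ((a + \<tau>) + N*q))"
  proof -
    have "(Q b * (((a + N*q) + \<tau>) mod (N*(N+1)))) mod (N+1) = (Q b * ((a + \<tau>) + N*q)) mod (N+1)"
      using mod_L_aux[of "Q b" "(a + N*q) + \<tau>" N] by (simp add: ac_simps)
    thus ?thesis unfolding z_def by (metis om_mod le_add2)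
  qed
  have 4: "cnj (z^(Q b * N * q)) = z^(Q b * q)"
  proof -
    have "cnj (z^(Q b * N * q)) = z^(N * (Q b * N * q))" unfolding z_def
      using om_cnj[of "N+1" "Q b * N * q"] by simp
    also have "\<dots> = z^(N*N*(Q b*q))" by (simp add: ac_simps)
    also have "\<dots> = z^(Q b * q)" unfolding z_def using om_NN[OF assms(1)] by simp
    finally show ?thesis .
  qed
  have "P a * (a + N*q) = P a * a + (P a * N) * q" by (simp add: algebra_simps)
  hence "z^(P a * (a + N*q)) = z^(P a * a) * (z^(P a * N))^q"
    by (simp only: power_add power_mult)
  moreover have "cnj (z^(Q b * ((a + \<tau>) + N*q))) = cnj (z^(Q b * (a+\<tau>))) * (z^(Q b))^q"
  proof -
    have "Q b * ((a + \<tau>) + N*q) = Q b * (a+\<tau>) + Q b * N * q" by (simp add: algebra_simps)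
    hence "cnj (z^(Q b * ((a + \<tau>) + N*q))) = cnj (z^(Q b * (a+\<tau>))) * cnj (z^(Q b * N * q))"
      by (simp only: power_add complex_cnj_mult)
    also have "\<dots> = cnj (z^(Q b * (a+\<tau>))) * (z^(Q b))^q" unfolding 4 by (simp only: power_mult)
    finally show ?thesis .
  qed
  ultimately show ?thesis unfolding 1 2 3
    by (simp add: power_add power_mult_distrib ac_simps)
qed

lemma geo:
  assumes "N \<ge> 1" "p < N+1" "p' < N+1"
  shows "(\<Sum>q<N+1. (omega (N+1) ^ (p*N+p'))^q) = (if p = p' then of_nat (N+1) else 0)"
proof (cases "p = p'")
  case True
  have "omega (N+1) ^ (p*N+p') = (omega (N+1) ^ (N+1)) ^ p"
  proof -
    have "p*N+p' = (N+1)*p" using True by (simp add: algebra_simps)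
    thus ?thesis by (simp only: power_mult)
  qed
  also have "\<dots> = 1" using om_n[of "N+1"] by simp
  finally show ?thesis using True by simp
next
  case False
  define y where "y = omega (N+1) ^ (p*N+p')"
  have "y \<noteq> 1"
  proof
    assume "y = 1"
    hence d: "(N+1) dvd (p*N+p')" unfolding y_def using om_pow_eq_1[of "N+1"] by simp
    have "int (p*N+p') = int (N+1) * int p + (int p' - int p)" by (simp add: algebra_simps)
    hence "int (N+1) dvd (int p' - int p)" using d
      by (metis dvd_add_right_iff dvd_triv_left of_nat_dvd_iff)
    moreover have "int p' - int p \<noteq> 0" using False by simp
    ultimately have "\<bar>int (N+1)\<bar> \<le> \<bar>int p' - int p\<bar>" using dvd_imp_le_int by blast
    thus False using assms by simp
  qed
  moreover have "y^(N+1) = 1" unfolding y_def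
    by (metis om_n le_add2 power_mult[symmetric] mult.commute power_one)
  ultimately have "(\<Sum>q<N+1. y^q) = 0" using geometric_sum[of y "N+1"] by simp
  thus ?thesis using False unfolding y_def by simp
qed

lemma corr_formula:
  fixes N :: nat and P Q :: "nat \<Rightarrow> nat" and \<tau> :: nat
  assumes N1: "N \<ge> 1" and PQ: "\<forall>a<N. P a < N" "\<forall>a<N. Q a < N"
  shows "pcorr (N*(N+1)) (\<lambda>i. omega (N+1)^(P (i mod N) * i)) (\<lambda>i. omega (N+1)^(Q (i mod N) * i)) \<tau>
     = of_nat (N+1) * (\<Sum>a\<in>{a. a<N \<and> P a = Q ((a+\<tau>) mod N)}.
           omega (N+1)^(P a * a) * cnj (omega (N+1)^(Q ((a+\<tau>) mod N) * (a+\<tau>))))"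
proof -
  define z where "z = omega (N+1)"
  define C where "C a = z^(P a * a) * cnj (z^(Q ((a+\<tau>) mod N) * (a+\<tau>)))" for a
  define f where "f t = z^(P (t mod N) * t) * cnj (z^(Q ((t + \<tau>) mod (N*(N+1)) mod N) * ((t + \<tau>) mod (N*(N+1)))))" for t
  have "pcorr (N*(N+1)) (\<lambda>i. z^(P (i mod N) * i)) (\<lambda>i. z^(Q (i mod N) * i)) \<tau> = (\<Sum>t<(N+1)*N. f t)"
    unfolding pcorr_def f_def by (simp add: mult.commute)
  also have "\<dots> = (\<Sum>q<N+1. \<Sum>a<N. f (a + N*q))" by (rule grid_sum)
  also have "\<dots> = (\<Sum>a<N. \<Sum>q<N+1. f (a + N*q))" by (rule sum.swap)
  also have "\<dots> = (\<Sum>a<N. C a * (\<Sum>q<N+1. (z^(P a * N + Q ((a+\<tau>) mod N)))^q))"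
  proof (rule sum.cong[OF refl])
    fix a assume a: "a \<in> {..<N}"
    have "(\<Sum>q<N+1. f (a + N*q)) = (\<Sum>q<N+1. C a * (z^(P a * N + Q ((a+\<tau>) mod N)))^q)"
      apply (rule sum.cong[OF refl])
      unfolding f_def C_def z_def using term_eq[OF N1] a by simp
    thus "(\<Sum>q<N+1. f (a + N*q)) = C a * (\<Sum>q<N+1. (z^(P a * N + Q ((a+\<tau>) mod N)))^q)"
      by (simp only: sum_distrib_left)
  qed
  also have "\<dots> = (\<Sum>a<N. C a * (if P a = Q ((a+\<tau>) mod N) then of_nat (N+1) else 0))"
  proof (rule sum.cong[OF refl])
    fix a assume a: "a \<in> {..<N}"
    have b: "(a+\<tau>) mod N < N" using N1 by simp
    have "P a < N+1" using PQ a by auto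
    moreover have "Q ((a+\<tau>) mod N) < N+1" using PQ(2) b less_SucI by auto
    ultimately show "C a * (\<Sum>q<N+1. (z^(P a * N + Q ((a+\<tau>) mod N)))^q)
        = C a * (if P a = Q ((a+\<tau>) mod N) then of_nat (N+1) else 0)"
      unfolding z_def using geo[OF N1] by simp
  qed
  also have "\<dots> = of_nat (N+1) * (\<Sum>a\<in>{a. a<N \<and> P a = Q ((a+\<tau>) mod N)}. C a)"
  proof -
    have "{a. a<N \<and> P a = Q ((a+\<tau>) mod N)} = {a\<in>{..<N}. P a = Q ((a+\<tau>) mod N)}" by auto
    hence "(\<Sum>a\<in>{a. a<N \<and> P a = Q ((a+\<tau>) mod N)}. C a) = (\<Sum>a<N. if P a = Q ((a+\<tau>) mod N) then C a else 0)"
      using sum.inter_filter[of "{..<N}" C "\<lambda>a. P a = Q ((a+\<tau>) mod N)"] by simp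
    hence "of_nat (N+1) * (\<Sum>a\<in>{a. a<N \<and> P a = Q ((a+\<tau>) mod N)}. C a) = (\<Sum>a<N. of_nat (N+1) * (if P a = Q ((a+\<tau>) mod N) then C a else 0))"
      by (simp only: sum_distrib_left)
    thus ?thesis by (auto intro!: sum.cong)
  qed
  finally show ?thesis unfolding z_def C_def .
qed


lemma CFR_le:
  assumes "is_CFR N M \<pi>" "N \<ge> 2"
  shows "M \<le> N"
proof -
  have bij: "\<forall>i<M. bij_betw (\<pi> i) {..<N} {..<N}"
    using assms unfolding is_CFR_def by auto
  have c: "\<forall>i<M. \<forall>j<M. \<forall>x<N. \<forall>y<N.
           (\<pi> i x = \<pi> j y \<and> \<pi> i ((x + 1) mod N) = \<pi> j ((y + 1) mod N)) \<longleftrightarrow> (i = j \<and> x = y)"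
  proof -
    have "\<forall>m. 1 \<le> m \<and> m < N \<longrightarrow>
        (\<forall>i<M. \<forall>j<M. \<forall>x<N. \<forall>y<N.
           (\<pi> i x = \<pi> j y \<and> \<pi> i ((x + m) mod N) = \<pi> j ((y + m) mod N))
           \<longleftrightarrow> (i = j \<and> x = y))" using assms(1) unfolding is_CFR_def by blast
    moreover have "1 \<le> (1::nat) \<and> 1 < N" using assms by simp
    ultimately show ?thesis by blast
  qed
  define f where "f = (\<lambda>(i,x). (\<pi> i x, \<pi> i ((x+1) mod N)))"
  have "inj_on f ({..<M} \<times> {..<N})"
    unfolding inj_on_def f_def using c by auto
  moreover have "f ` ({..<M} \<times> {..<N}) \<subseteq> {..<N} \<times> {..<N}"
  proof
    fix p assume "p \<in> f ` ({..<M} \<times> {..<N})"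
    then obtain i x where ix: "i < M" "x < N" "p = f (i,x)" by auto
    have "(x+1) mod N < N" using assms by simp
    hence "\<pi> i ((x+1) mod N) < N" "\<pi> i x < N" using ix bij bij_betw_apply lessThan_iff by metis+
    thus "p \<in> {..<N} \<times> {..<N}" using ix bij unfolding f_def bij_betw_def by auto
  qed
  ultimately have "card ({..<M} \<times> {..<N}) \<le> card ({..<N} \<times> {..<N})"
    by (intro card_inj_on_le) auto
  hence "M * N \<le> N * N" by (simp add: card_cartesian_product)
  thus ?thesis using assms by simp
qed

lemma int_mod_dvd: "((a::nat) mod (N::nat) = b mod N) \<longleftrightarrow> int N dvd int a - int b"
  by (metis mod_eq_dvd_iff of_nat_eq_iff zmod_int)

lemma bij_mult_mod:
  fixes c N :: nat
  assumes "coprime c N" "N \<ge> 1"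
  shows "bij_betw (\<lambda>x. (c * x) mod N) {..<N} {..<N}"
proof -
  have inj: "inj_on (\<lambda>x. (c * x) mod N) {..<N}"
  proof (rule inj_onI)
    fix x y assume xy: "x \<in> {..<N}" "y \<in> {..<N}" "(c * x) mod N = (c * y) mod N"
    hence "int N dvd int c * (int x - int y)" using int_mod_dvd by (simp add: algebra_simps)
    moreover have "coprime (int N) (int c)" using assms by (simp add: coprime_commute)
    ultimately have "int N dvd int x - int y" using coprime_dvd_mult_right_iff by blast
    hence "x mod N = y mod N" using int_mod_dvd by blast
    thus "x = y" using xy by simp
  qed
  moreover have "(\<lambda>x. (c * x) mod N) ` {..<N} \<subseteq> {..<N}" using assms by auto
  ultimately show ?thesis using endo_inj_surj[of "{..<N}"] unfolding bij_betw_def by auto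
qed

lemma CFR_2:
  assumes "odd N" "N \<ge> 3"
  shows "is_CFR N 2 (\<lambda>i x. ((i+1) * x) mod N)"
  unfolding is_CFR_def
proof (intro conjI allI impI)
  fix i :: nat assume "i < 2"
  moreover have "coprime (i+1) N" if "i < 2"
  proof -
    have "i = 0 \<or> i = 1" using that by auto
    thus ?thesis using assms by (auto simp: numeral_2_eq_2[symmetric])
  qed
  ultimately show "bij_betw (\<lambda>x. ((i+1) * x) mod N) {..<N} {..<N}"
    using bij_mult_mod[of "i+1" N] assms by simp
next
  fix m i j x y :: nat
  assume m: "1 \<le> m \<and> m < N" and ij: "i < 2" "j < 2" and xy: "x < N" "y < N"
  show "(((i+1) * x) mod N = ((j+1) * y) mod N \<and>
         ((i+1) * ((x + m) mod N)) mod N = ((j+1) * ((y + m) mod N)) mod N) \<longleftrightarrow> (i = j \<and> x = y)"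
  proof
    assume h: "((i+1) * x) mod N = ((j+1) * y) mod N \<and>
         ((i+1) * ((x + m) mod N)) mod N = ((j+1) * ((y + m) mod N)) mod N"
    have h1: "int N dvd int (i+1) * int x - int (j+1) * int y"
      using h int_mod_dvd[of "(i+1)*x" N "(j+1)*y"] by (simp only: of_nat_mult)
    have "((i+1) * (x + m)) mod N = ((j+1) * (y + m)) mod N"
      using h by (metis mod_mult_right_eq)
    hence h2: "int N dvd int (i+1) * (int x + int m) - int (j+1) * (int y + int m)"
      using int_mod_dvd[of "(i+1)*(x+m)" N "(j+1)*(y+m)"] by (simp only: of_nat_mult of_nat_add)
    have "int N dvd (int (i+1) * (int x + int m) - int (j+1) * (int y + int m))
                    - (int (i+1) * int x - int (j+1) * int y)"
      using h1 h2 by (rule dvd_diff[rotated])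
    hence h3: "int N dvd (int i - int j) * int m" by (simp add: algebra_simps)
    show "i = j \<and> x = y"
    proof (cases "i = j")
      case False
      hence "int i - int j = 1 \<or> int i - int j = -1" using ij by auto
      hence "int N dvd int m" using h3 by auto
      hence "N dvd m" by simp
      thus ?thesis using m by (auto dest: dvd_imp_le)
    next
      case True
      have "i = 0 \<or> i = 1" using ij by auto
      hence "coprime (int N) (int (i+1))" using assms by (auto simp: coprime_commute numeral_2_eq_2[symmetric])
      moreover have "int N dvd int (i+1) * (int x - int y)" using h1 True by (simp add: algebra_simps)
      ultimately have "int N dvd int x - int y" using coprime_dvd_mult_right_iff by blast
      hence "x mod N = y mod N" using int_mod_dvd by blast
      thus ?thesis using xy True by simp
    qed
  qed simp
qed

lemma F_tilde_props:
  assumes "odd N" "N \<ge> 3"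
  shows "2 \<le> F_tilde N" "\<exists>\<pi>. is_CFR N (F_tilde N) \<pi>"
proof -
  have b: "\<And>M. (\<exists>\<pi>. is_CFR N M \<pi>) \<Longrightarrow> M \<le> N" using CFR_le assms by auto
  have e: "\<exists>\<pi>. is_CFR N 2 \<pi>" using CFR_2[OF assms] by blast
  show "2 \<le> F_tilde N" unfolding F_tilde_def by (rule Greatest_le_nat[of "\<lambda>M. \<exists>\<pi>. is_CFR N M \<pi>", OF e b])
  show "\<exists>\<pi>. is_CFR N (F_tilde N) \<pi>" unfolding F_tilde_def by (rule GreatestI_nat[of "\<lambda>M. \<exists>\<pi>. is_CFR N M \<pi>", OF e b])
qed


lemma CFR_bij: "is_CFR N K \<pi> \<Longrightarrow> i < K \<Longrightarrow> bij_betw (\<pi> i) {..<N} {..<N}"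
  unfolding is_CFR_def by blast

lemma CFR_lt: "is_CFR N K \<pi> \<Longrightarrow> i < K \<Longrightarrow> \<forall>a<N. \<pi> i a < N"
  using CFR_bij bij_betw_apply lessThan_iff by metis

lemma cross_uniq:
  assumes cfr: "is_CFR N K \<pi>" and ij: "i < K" "j < K" "i \<noteq> j"
    and a1: "a1 < N" "\<pi> i a1 = \<pi> j ((a1+\<tau>) mod N)"
    and a2: "a2 < N" "\<pi> i a2 = \<pi> j ((a2+\<tau>) mod N)"
    and lt: "a1 < a2"
  shows False
proof -
  define m where "m = a2 - a1"
  have m: "1 \<le> m \<and> m < N" using lt a2 unfolding m_def by auto
  have c: "\<forall>x<N. \<forall>y<N.
           (\<pi> i x = \<pi> j y \<and> \<pi> i ((x + m) mod N) = \<pi> j ((y + m) mod N))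
           \<longleftrightarrow> (i = j \<and> x = y)" using cfr m ij unfolding is_CFR_def by blast
  have N0: "N > 0" using a1 by simp
  have e1: "(a1 + m) mod N = a2" using lt a2 unfolding m_def by simp
  have e2: "((a1+\<tau>) mod N + m) mod N = (a2+\<tau>) mod N"
  proof -
    have "((a1+\<tau>) mod N + m) mod N = (a1+\<tau> + m) mod N" by (simp add: mod_add_left_eq)
    moreover have "a1+\<tau> + m = a2+\<tau>" using lt unfolding m_def by simp
    ultimately show ?thesis by simp
  qed
  have "(a1+\<tau>) mod N < N" using N0 by simp
  thus False using c a1 a2 ij e1 e2 by metis
qed

lemma norm_1N[simp]: "cmod (1 + complex_of_nat N) = 1 + real N"
  using norm_of_nat[of "Suc N", where 'a=complex] by simp

lemma norm_cnj_om[simp]: "norm (cnj (omega n) ^ B) = 1"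
  by (metis complex_cnj_power complex_mod_cnj om_norm)

lemma norm_C[simp]: "norm (omega n ^ A * cnj (omega n ^ B)) = 1"
  by (simp add: norm_mult)

lemma corr_cfr:
  assumes cfr: "is_CFR N K \<pi>" and N1: "N \<ge> 1" and ij: "i < K" "j < K"
  shows "pcorr (N*(N+1)) (cfr_seq N \<pi> i) (cfr_seq N \<pi> j) \<tau>
     = of_nat (N+1) * (\<Sum>a\<in>{a. a<N \<and> \<pi> i a = \<pi> j ((a+\<tau>) mod N)}.
           omega (N+1)^(\<pi> i a * a) * cnj (omega (N+1)^(\<pi> j ((a+\<tau>) mod N) * (a+\<tau>))))"
  unfolding cfr_seq_def
  by (rule corr_formula[OF N1 CFR_lt[OF cfr ij(1)] CFR_lt[OF cfr ij(2)]])

lemma cross_le: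
  assumes cfr: "is_CFR N K \<pi>" and N1: "N \<ge> 1" and ij: "i < K" "j < K" "i \<noteq> j"
  shows "cmod (pcorr (N*(N+1)) (cfr_seq N \<pi> i) (cfr_seq N \<pi> j) \<tau>) \<le> real (N+1)"
proof -
  define S where "S = {a. a<N \<and> \<pi> i a = \<pi> j ((a+\<tau>) mod N)}"
  have "S = {} \<or> (\<exists>a0. S = {a0})"
  proof (cases "S = {}")
    case False
    then obtain a0 where a0: "a0 \<in> S" by auto
    have "S = {a0}"
    proof
      show "S \<subseteq> {a0}"
      proof
        fix a assume a: "a \<in> S"
        show "a \<in> {a0}"
        proof (rule ccontr)
          assume "a \<notin> {a0}"
          hence "a < a0 \<or> a0 < a" by auto
          thus False using cross_uniq[OF cfr ij] a a0 unfolding S_def by blast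
        qed
      qed
    qed (use a0 in auto)
    thus ?thesis by blast
  qed simp
  thus ?thesis
    using corr_cfr[OF cfr N1 ij(1,2), of \<tau>] unfolding S_def[symmetric]
    by (auto simp: norm_mult)
qed

lemma cross_eq:
  assumes cfr: "is_CFR N K \<pi>" and N1: "N \<ge> 1" and K: "K \<ge> 2"
  shows "\<exists>\<tau><N*(N+1). cmod (pcorr (N*(N+1)) (cfr_seq N \<pi> 0) (cfr_seq N \<pi> 1) \<tau>) = real (N+1)"
proof -
  have v: "\<pi> 0 0 < N" using CFR_lt[OF cfr, of 0] K N1 by auto
  obtain y where y: "y < N" "\<pi> 1 y = \<pi> 0 0"
    using CFR_bij[OF cfr, of 1] K v unfolding bij_betw_def
    by (metis imageE lessThan_iff one_less_numeral_iff semiring_norm(76) order_less_le_trans)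
  define S where "S = {a. a<N \<and> \<pi> 0 a = \<pi> 1 ((a+y) mod N)}"
  have "0 \<in> S" unfolding S_def using y N1 by simp
  moreover have "\<And>a. a \<in> S \<Longrightarrow> a = 0"
  proof (rule ccontr)
    fix a assume "a \<in> S" "a \<noteq> 0"
    thus False using cross_uniq[OF cfr, of 0 1 0 y a] \<open>0 \<in> S\<close> K unfolding S_def by auto
  qed
  ultimately have "S = {0}" by blast
  hence "cmod (pcorr (N*(N+1)) (cfr_seq N \<pi> 0) (cfr_seq N \<pi> 1) y) = real (N+1)"
    using corr_cfr[OF cfr N1, of 0 1 y] K unfolding S_def[symmetric]
    by (auto simp: norm_mult)
  moreover have "y < N*(N+1)" using y(1) by (metis less_le_trans mult_le_mono2 mult_1_right le_add2 add.commute)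
  ultimately show ?thesis by blast
qed


lemma auto_le:
  assumes cfr: "is_CFR N K \<pi>" and N1: "N \<ge> 1" and i: "i < K"
    and t: "0 < \<tau>" "\<tau> < N*(N+1)"
  shows "cmod (pcorr (N*(N+1)) (cfr_seq N \<pi> i) (cfr_seq N \<pi> i) \<tau>) \<le> real (N+1)"
proof -
  define S where "S = {a. a<N \<and> \<pi> i a = \<pi> i ((a+\<tau>) mod N)}"
  define z where "z = omega (N+1)"
  have bij: "bij_betw (\<pi> i) {..<N} {..<N}" by (rule CFR_bij[OF cfr i])
  have corr: "pcorr (N*(N+1)) (cfr_seq N \<pi> i) (cfr_seq N \<pi> i) \<tau> = of_nat (N+1) *
     (\<Sum>a\<in>S. z^(\<pi> i a * a) * cnj (z^(\<pi> i ((a+\<tau>) mod N) * (a+\<tau>))))"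
    using corr_cfr[OF cfr N1 i i, of \<tau>] unfolding S_def z_def .
  show ?thesis
  proof (cases "\<tau> mod N = 0")
    case False
    have "S = {}"
    proof (rule ccontr)
      assume "S \<noteq> {}"
      then obtain a where a: "a < N" "\<pi> i a = \<pi> i ((a+\<tau>) mod N)" unfolding S_def by auto
      have "(a+\<tau>) mod N < N" using N1 by simp
      hence "a = (a+\<tau>) mod N" using a bij unfolding bij_betw_def inj_on_def by auto
      hence "(a+\<tau>) mod N = a mod N" using a by simp
      hence "int N dvd int (a+\<tau>) - int a" using int_mod_dvd by blast
      hence "N dvd \<tau>" by simp
      thus False using False by simp
    qed
    thus ?thesis using corr by simp
  next
    case True
    have SN: "S = {..<N}" unfolding S_def using True by (auto simp: mod_add_right_eq[symmetric])
    define y where "y = z^\<tau>"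
    have tm: "z^(\<pi> i a * a) * cnj (z^(\<pi> i ((a+\<tau>) mod N) * (a+\<tau>))) = cnj (y^(\<pi> i a))" if "a < N" for a
    proof -
      have "(a+\<tau>) mod N = a" using True that by (simp add: mod_add_right_eq[symmetric])
      hence "z^(\<pi> i a * a) * cnj (z^(\<pi> i ((a+\<tau>) mod N) * (a+\<tau>)))
          = (z^(\<pi> i a * a) * cnj (z^(\<pi> i a * a))) * cnj (y^(\<pi> i a))"
        unfolding y_def by (simp add: algebra_simps power_add power_mult)
      also have "z^(\<pi> i a * a) * cnj (z^(\<pi> i a * a)) = 1"
        using complex_norm_square[of "z^(\<pi> i a * a)"] unfolding z_def by simp
      finally show ?thesis by simp
    qed
    have "(\<Sum>a\<in>S. z^(\<pi> i a * a) * cnj (z^(\<pi> i ((a+\<tau>) mod N) * (a+\<tau>))))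
        = (\<Sum>a<N. cnj (y^(\<pi> i a)))" unfolding SN using tm by simp
    also have "\<dots> = cnj (\<Sum>a<N. y^(\<pi> i a))" by simp
    also have "(\<Sum>a<N. y^(\<pi> i a)) = (\<Sum>v<N. y^v)"
      using sum.reindex_bij_betw[OF bij, of "\<lambda>v. y^v"] .
    finally have s: "(\<Sum>a\<in>S. z^(\<pi> i a * a) * cnj (z^(\<pi> i ((a+\<tau>) mod N) * (a+\<tau>))))
        = cnj (\<Sum>v<N. y^v)" .
    have y1: "y \<noteq> 1"
    proof
      assume "y = 1"
      hence d: "(N+1) dvd \<tau>" unfolding y_def z_def using om_pow_eq_1[of "N+1" \<tau>] by simp
      obtain s where s: "\<tau> = N * s" using True by auto
      have "coprime (N+1) N" by simp
      hence "(N+1) dvd s" using d s coprime_dvd_mult_right_iff by metis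
      moreover have "s > 0" using s t by auto
      moreover have "N * s < N * (N+1)" using s t by simp
      hence "s < N+1" by (meson mult_less_cancel1)
      ultimately show False by (auto dest: dvd_imp_le)
    qed
    have yN: "y^(N+1) = 1" unfolding y_def z_def
      by (metis om_n le_add2 power_mult[symmetric] mult.commute power_one)
    have "(\<Sum>v<N+1. y^v) = 0" using geometric_sum[OF y1, of "N+1"] yN by simp
    hence "(\<Sum>v<N. y^v) = - (y^N)" by (simp add: eq_neg_iff_add_eq_0)
    moreover have "norm (y^N) = 1" unfolding y_def z_def by (simp add: power_mult[symmetric])
    ultimately have "norm (\<Sum>v<N. y^v) = 1" by simp
    hence "norm (cnj (\<Sum>v<N. y^v)) = 1" by (simp only: complex_mod_cnj)
    hence "norm (pcorr (N*(N+1)) (cfr_seq N \<pi> i) (cfr_seq N \<pi> i) \<tau>) = real (N+1)"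
      unfolding corr s norm_mult by (simp only: norm_of_nat mult_1_right)
    thus ?thesis by simp
  qed
qed


lemma theta_c_eq:
  assumes cfr: "is_CFR N K \<pi>" and N1: "N \<ge> 1" and K: "K \<ge> 2"
  shows "theta_c N K \<pi> = real (N+1)"
proof -
  define A where "A = {cmod (pcorr (N * (N + 1)) (cfr_seq N \<pi> m) (cfr_seq N \<pi> m') \<tau>) | m m' \<tau>.
      m < K \<and> m' < K \<and> m \<noteq> m' \<and> \<tau> < N * (N + 1)}"
  have "A \<subseteq> (\<lambda>(m,m',\<tau>). cmod (pcorr (N * (N + 1)) (cfr_seq N \<pi> m) (cfr_seq N \<pi> m') \<tau>)) `
           ({..<K} \<times> {..<K} \<times> {..<N*(N+1)})"
  proof
    fix x assume "x \<in> A"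
    then obtain m m' \<tau> where "m < K" "m' < K" "\<tau> < N*(N+1)"
      "x = cmod (pcorr (N * (N + 1)) (cfr_seq N \<pi> m) (cfr_seq N \<pi> m') \<tau>)" unfolding A_def by auto
    thus "x \<in> (\<lambda>(m,m',\<tau>). cmod (pcorr (N * (N + 1)) (cfr_seq N \<pi> m) (cfr_seq N \<pi> m') \<tau>)) `
           ({..<K} \<times> {..<K} \<times> {..<N*(N+1)})" by (intro rev_image_eqI[of "(m,m',\<tau>)"]) auto
  qed
  hence fin: "finite A" by (rule finite_subset) auto
  have le: "\<forall>x\<in>A. x \<le> real (N+1)" unfolding A_def using cross_le[OF cfr N1] by auto
  obtain \<tau> where tau: "\<tau> < N*(N+1)" "cmod (pcorr (N*(N+1)) (cfr_seq N \<pi> 0) (cfr_seq N \<pi> 1) \<tau>) = real (N+1)"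
    using cross_eq[OF cfr N1 K] by blast
  have "real (N+1) \<in> A" unfolding A_def using K tau
    by (intro CollectI exI[of _ 0] exI[of _ 1] exI[of _ \<tau>]) auto
  hence "Max A = real (N+1)" using fin le by (intro Max_eqI) auto
  thus ?thesis unfolding theta_c_def A_def .
qed

lemma theta_a_le:
  assumes cfr: "is_CFR N K \<pi>" and N1: "N \<ge> 1" and K: "K \<ge> 1"
  shows "theta_a N K \<pi> \<le> real (N+1)"
proof -
  define A where "A = {cmod (pcorr (N * (N + 1)) (cfr_seq N \<pi> m) (cfr_seq N \<pi> m) \<tau>) | m \<tau>.
      m < K \<and> 0 < \<tau> \<and> \<tau> < N * (N + 1)}"
  have "A \<subseteq> (\<lambda>(m,\<tau>). cmod (pcorr (N * (N + 1)) (cfr_seq N \<pi> m) (cfr_seq N \<pi> m) \<tau>)) `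
           ({..<K} \<times> {..<N*(N+1)})"
  proof
    fix x assume "x \<in> A"
    then obtain m \<tau> where "m < K" "\<tau> < N*(N+1)"
      "x = cmod (pcorr (N * (N + 1)) (cfr_seq N \<pi> m) (cfr_seq N \<pi> m) \<tau>)" unfolding A_def by auto
    thus "x \<in> (\<lambda>(m,\<tau>). cmod (pcorr (N * (N + 1)) (cfr_seq N \<pi> m) (cfr_seq N \<pi> m) \<tau>)) `
           ({..<K} \<times> {..<N*(N+1)})" by (intro rev_image_eqI[of "(m,\<tau>)"]) auto
  qed
  hence fin: "finite A" by (rule finite_subset) auto
  have le: "\<forall>x\<in>A. x \<le> real (N+1)" unfolding A_def using auto_le[OF cfr N1] by auto
  have "1*2 \<le> N*(N+1)" using N1 by (intro mult_le_mono) auto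
  hence L1: "1 < N*(N+1)" by simp
  have "cmod (pcorr (N * (N + 1)) (cfr_seq N \<pi> 0) (cfr_seq N \<pi> 0) 1) \<in> A"
    unfolding A_def using K L1 by (intro CollectI exI[of _ 0] exI[of _ 1]) simp
  hence "A \<noteq> {}" by auto
  hence "Max A \<le> real (N+1)" using fin le by (intro Max.boundedI) auto
  thus ?thesis unfolding theta_a_def A_def .
qed

lemma theta_max_eq:
  assumes cfr: "is_CFR N K \<pi>" and N1: "N \<ge> 1" and K: "K \<ge> 2"
  shows "theta_max N K \<pi> = real (N+1)"
  using theta_c_eq[OF assms] theta_a_le[OF cfr N1] K unfolding theta_max_def by auto

lemma r_bounds:
  fixes k l n :: real
  assumes "k \<ge> 2" "l \<ge> n+1" "n \<ge> 1"
  shows "1 - 1/k \<le> ((k-1)*l+n)/(k*l-1)" "((k-1)*l+n)/(k*l-1) \<le> 1"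
proof -
  have "k*l \<ge> 2*1" using assms by (intro mult_mono) auto
  hence D: "k*l - 1 > 0" by linarith
  have "(1 - 1/k) * (k*l-1) \<le> (k-1)*l+n"
  proof -
    have "(1 - 1/k) * (k*l-1) = k*l - 1 - l + 1/k" using assms by (simp add: field_simps)
    also have "\<dots> \<le> (k-1)*l+n"
    proof -
      have "1/k \<le> 1" using assms by simp
      moreover have "(k-1)*l = k*l - l" by (simp add: algebra_simps)
      ultimately show ?thesis using assms by linarith
    qed
    finally show ?thesis .
  qed
  thus "1 - 1/k \<le> ((k-1)*l+n)/(k*l-1)" using D by (simp add: le_divide_eq)
  show "((k-1)*l+n)/(k*l-1) \<le> 1" using D assms by (simp add: divide_le_eq algebra_simps)
qed

lemma opti_eq:
  assumes "N \<ge> 1" "K \<ge> 2"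
  shows "real (N+1) / theta_opti K (N*(N+1)) N =
     1 / sqrt (((real K - 1) * real (N*(N+1)) + real N) / (real K * real (N*(N+1)) - 1))"
proof -
  define X where "X = (real K - 1) * real (N*(N+1)) + real N"
  define D where "D = real K * real (N*(N+1)) - 1"
  have LN: "real (N*(N+1)) - real N = real N * real N" by (simp add: algebra_simps)
  have "sqrt (X / ((real N * real N) * D)) = sqrt (X / D) / real N"
    by (simp add: real_sqrt_divide real_sqrt_mult field_simps)
  hence to: "theta_opti K (N*(N+1)) N = real (N+1) * sqrt (X/D)"
    unfolding theta_opti_def X_def[symmetric] D_def[symmetric] LN using assms
    by (simp add: field_simps)
  have "X > 0" unfolding X_def using assms by (simp add: add_pos_nonneg)
  moreover have "D > 0"
  proof -
    have "N*(N+1) \<ge> 1*1" using assms by (intro mult_le_mono) auto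
    hence "real (N*(N+1)) \<ge> 1" by (metis mult_1 of_nat_1 of_nat_le_iff)
    moreover have "real K \<ge> 2" using assms by simp
    ultimately have "real K * real (N*(N+1)) \<ge> 2*1" by (intro mult_mono) auto
    thus ?thesis unfolding D_def by linarith
  qed
  ultimately have "sqrt (X/D) > 0" by simp
  thus ?thesis unfolding to X_def[symmetric] D_def[symmetric] by simp
qed


theorem theorem4:
  shows "(\<forall>N \<pi>. odd N \<and> N \<ge> 3 \<and> is_CFR N (F_tilde N) \<pi> \<longrightarrow>
            theta_c N (F_tilde N) \<pi> = real (N * (N + 1)) / sqrt (real (N * (N + 1)) - real N))
       \<and> (\<forall>(Ns :: nat \<Rightarrow> nat) (P :: nat \<Rightarrow> nat \<Rightarrow> nat \<Rightarrow> nat).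
            (\<forall>k. odd (Ns k) \<and> Ns k \<ge> 3 \<and> is_CFR (Ns k) (F_tilde (Ns k)) (P k)) \<and>
            filterlim Ns at_top sequentially \<and>
            filterlim (\<lambda>k. F_tilde (Ns k)) at_top sequentially \<longrightarrow>
            (\<lambda>k. theta_max (Ns k) (F_tilde (Ns k)) (P k) /
                 theta_opti (F_tilde (Ns k)) (Ns k * (Ns k + 1)) (Ns k)) \<longlonglongrightarrow> 1)"
proof (intro conjI allI impI)
  fix N \<pi> assume h: "odd N \<and> N \<ge> 3 \<and> is_CFR N (F_tilde N) \<pi>"
  have "theta_c N (F_tilde N) \<pi> = real (N+1)"
    using theta_c_eq[of N "F_tilde N" \<pi>] F_tilde_props[of N] h by auto
  moreover have "real (N * (N + 1)) - real N = real N ^ 2" by (simp add: algebra_simps power2_eq_square)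
  moreover have "real N > 0" using h by simp
  ultimately show "theta_c N (F_tilde N) \<pi> = real (N * (N + 1)) / sqrt (real (N * (N + 1)) - real N)"
    by (simp add: field_simps power2_eq_square)
next
  fix Ns :: "nat \<Rightarrow> nat" and P :: "nat \<Rightarrow> nat \<Rightarrow> nat \<Rightarrow> nat"
  assume h: "(\<forall>k. odd (Ns k) \<and> Ns k \<ge> 3 \<and> is_CFR (Ns k) (F_tilde (Ns k)) (P k)) \<and>
            filterlim Ns at_top sequentially \<and>
            filterlim (\<lambda>k. F_tilde (Ns k)) at_top sequentially"
  define K where "K k = F_tilde (Ns k)" for k
  define r where "r k = ((real (K k) - 1) * real (Ns k * (Ns k + 1)) + real (Ns k)) /
                         (real (K k) * real (Ns k * (Ns k + 1)) - 1)" for k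
  have K2: "K k \<ge> 2" for k using F_tilde_props[of "Ns k"] h unfolding K_def by auto
  have eq: "theta_max (Ns k) (F_tilde (Ns k)) (P k) / theta_opti (F_tilde (Ns k)) (Ns k * (Ns k + 1)) (Ns k)
        = 1 / sqrt (r k)" for k
  proof -
    have N1: "Ns k \<ge> 1" using h by (metis le_trans one_le_numeral)
    have "theta_max (Ns k) (K k) (P k) = real (Ns k + 1)"
      using theta_max_eq[of "Ns k" "K k" "P k"] h K2 N1 unfolding K_def by auto
    thus ?thesis using opti_eq[OF N1 K2[of k]] unfolding r_def K_def by simp
  qed
  have Klim: "filterlim (\<lambda>k. real (K k)) at_top sequentially"
    using filterlim_compose[OF filterlim_real_sequentially] h unfolding K_def by blast
  have lo: "(\<lambda>k. 1 - inverse (real (K k))) \<longlonglongrightarrow> 1 - 0"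
    by (intro tendsto_intros tendsto_inverse_0_at_top[OF Klim])
  have bnds: "1 - inverse (real (K k)) \<le> r k \<and> r k \<le> 1" for k
  proof -
    have N1: "real (Ns k) \<ge> 1" using h by (metis le_trans of_nat_1 of_nat_le_iff one_le_numeral)
    have "real (Ns k * (Ns k + 1)) \<ge> real (Ns k) + 1"
    proof -
      have "real (Ns k) * real (Ns k) \<ge> 1 * 1" using N1 by (intro mult_mono) auto
      thus ?thesis by (simp add: algebra_simps)
    qed
    moreover have "real (K k) \<ge> 2" using K2[of k] by simp
    ultimately have "1 - 1/real (K k) \<le> r k" "r k \<le> 1"
      using r_bounds[where k="real (K k)" and l="real (Ns k * (Ns k + 1))" and n="real (Ns k)"] N1
      unfolding r_def by blast+
    thus ?thesis by (simp add: inverse_eq_divide)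
  qed
  have rlim: "r \<longlonglongrightarrow> 1"
    by (rule tendsto_sandwich[OF _ _ lo[simplified] tendsto_const]) (use bnds in auto)
  have "(\<lambda>k. 1 / sqrt (r k)) \<longlonglongrightarrow> 1 / sqrt 1"
    by (intro tendsto_intros rlim) simp
  thus "(\<lambda>k. theta_max (Ns k) (F_tilde (Ns k)) (P k) /
                 theta_opti (F_tilde (Ns k)) (Ns k * (Ns k + 1)) (Ns k)) \<longlonglongrightarrow> 1"
    unfolding eq by simp
qed

end
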